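(* Let $n$ be a positive integer and let $G$ be a finite simple graph which is gap-free and $n$-claw-free. Then $\operatorname{reg}(I(G))\leq n$. *)

theory Defs
  imports Main "HOL-Library.Poly_Mapping" "HOL-Library.Function_Algebras" "HOL-Library.Extended_Real"
begin

text \<open>A finite simple graph: vertex set = UNIV of a finite type 'v, edges given by a
symmetric irreflexive relation E.\<close>

definition simple_graph :: "('v \<Rightarrow> 'v \<Rightarrow> bool) \<Rightarrow> bool" where
  "simple_graph E \<longleftrightarrow> (\<forall>u v. E u v \<longrightarrow> E v u) \<and> (\<forall>v. \<not> E v v)"

text \<open>Gap-free: G has no induced subgraph 2K2, i.e. any two edges with four distinct
endpoints are joined by an edge.\<close>
definition gap_free :: "('v \<Rightarrow> 'v \<Rightarrow> bool) \<Rightarrow> bool" where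
  "gap_free E \<longleftrightarrow> (\<forall>a b c d. E a b \<and> E c d \<and> {a, b} \<inter> {c, d} = {} \<longrightarrow>
      E a c \<or> E a d \<or> E b c \<or> E b d)"

text \<open>n-claw-free: G has no induced subgraph isomorphic to the n-claw K_{1,n}, i.e. no
vertex has n pairwise non-adjacent neighbours.\<close>
definition claw_free :: "nat \<Rightarrow> ('v \<Rightarrow> 'v \<Rightarrow> bool) \<Rightarrow> bool" where
  "claw_free n E \<longleftrightarrow> \<not> (\<exists>v S. finite S \<and> card S = n \<and> (\<forall>s\<in>S. E v s) \<and>
      (\<forall>s\<in>S. \<forall>t\<in>S. \<not> E s t))"

type_synonym ('v, 'k) mpoly = "('v \<Rightarrow>\<^sub>0 nat) \<Rightarrow>\<^sub>0 'k"

definition Var :: "'v \<Rightarrow> ('v, 'k::comm_ring_1) mpoly" where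
  "Var v = Poly_Mapping.single (Poly_Mapping.single v 1) 1"

definition mon_deg :: "('v \<Rightarrow>\<^sub>0 nat) \<Rightarrow> nat" where
  "mon_deg m = (\<Sum>v\<in>Poly_Mapping.keys m. Poly_Mapping.lookup m v)"

text \<open>Homogeneous of (integer) degree d; the zero polynomial is homogeneous of every degree.\<close>
definition homogeneous :: "int \<Rightarrow> ('v, 'k::zero) mpoly \<Rightarrow> bool" where
  "homogeneous d p \<longleftrightarrow> (\<forall>m\<in>Poly_Mapping.keys p. int (mon_deg m) = d)"

text \<open>Edge ideal I(G) = (x_u x_v : uv edge); since the vertex set is finite this is the
set of all combinations of the generators with polynomial coefficients.\<close>
definition edge_ideal :: "('v::finite \<Rightarrow> 'v \<Rightarrow> bool) \<Rightarrow> ('v, 'k::comm_ring_1) mpoly set" where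
  "edge_ideal E = {p. \<exists>c. p = (\<Sum>e\<in>{(u, v). E u v}. c e * Var (fst e) * Var (snd e))}"

text \<open>beta_{i,j}(I) = dim_k Tor_i(I, k)_j, computed as the homology of I tensored with the
Koszul complex on the variables.  A chain of homological degree i is a function
c : 'v set => polynomial, with c S the coefficient of e_S (|S| = i).\<close>

definition vorder :: "'v::finite \<Rightarrow> nat" where
  "vorder = (SOME f. inj f)"

definition ksign :: "'v::finite \<Rightarrow> 'v set \<Rightarrow> 'k::comm_ring_1" where
  "ksign s S = (- 1) ^ card {t\<in>S. vorder t < vorder s}"

text \<open>Koszul differential d(f e_S) = sum over s in S of sign * x_s f e_{S - s}.\<close>
definition koszul_d :: "('v::finite set \<Rightarrow> ('v, 'k::comm_ring_1) mpoly) \<Rightarrow> ('v set \<Rightarrow> ('v, 'k) mpoly)" where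
  "koszul_d c = (\<lambda>T. \<Sum>s\<in>UNIV - T. Poly_Mapping.single 0 (ksign s (insert s T)) * Var s * c (insert s T))"

text \<open>Degree-j part of the i-th chain module of I (x) K(x): elements f e_S with |S| = i,
f in I homogeneous of degree j - i.\<close>
definition koszul_chains :: "('v::finite, 'k::comm_ring_1) mpoly set \<Rightarrow> nat \<Rightarrow> int \<Rightarrow> ('v set \<Rightarrow> ('v, 'k) mpoly) set" where
  "koszul_chains I i j = {c. \<forall>S. c S \<noteq> 0 \<longrightarrow> card S = i \<and> c S \<in> I \<and> homogeneous (j - int i) (c S)}"

definition kscale :: "'k::field \<Rightarrow> ('v set \<Rightarrow> ('v, 'k) mpoly) \<Rightarrow> ('v set \<Rightarrow> ('v, 'k) mpoly)" where
  "kscale a c = (\<lambda>S. Poly_Mapping.map ((*) a) (c S))"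

definition kdim :: "('v set \<Rightarrow> ('v, 'k::field) mpoly) set \<Rightarrow> nat" where
  "kdim = vector_space.dim kscale"

definition graded_betti :: "('v::finite, 'k::field) mpoly set \<Rightarrow> nat \<Rightarrow> int \<Rightarrow> nat" where
  "graded_betti I i j =
     kdim {c \<in> koszul_chains I i j. koszul_d c = (\<lambda>_. 0)} - kdim (koszul_d ` koszul_chains I (Suc i) j)"

text \<open>Castelnuovo-Mumford regularity reg(I) = max{ j - i : beta_{i,j}(I) \<noteq> 0 }
(= -infinity for the zero ideal).\<close>
definition cm_reg :: "('v::finite, 'k::field) mpoly set \<Rightarrow> ereal" where
  "cm_reg I = Sup {ereal (of_int (j - int i)) | i j. graded_betti I i j \<noteq> 0}"

end

theory Submission imports Defs begin

lemma inj_vorder: "inj (vorder :: 'v::finite \<Rightarrow> nat)"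
proof -
  obtain f :: "'v \<Rightarrow> nat" and m where "inj_on f UNIV"
    using finite_imp_inj_to_nat_seg[OF finite_UNIV] by metis
  then have "\<exists>f::'v \<Rightarrow> nat. inj f" by blast
  then show ?thesis unfolding vorder_def by (rule someI_ex)
qed

lemma ksign_sq: "ksign s S * ksign s S = (1::'k::comm_ring_1)"
  unfolding ksign_def by (simp flip: power_mult_distrib)

lemma ksign_swap_lt:
  fixes X :: "'v::finite set"
  assumes "a \<in> X" "b \<in> X" "vorder b < vorder a"
  shows "ksign a X * ksign b (X - {a}) = - (ksign b X * (ksign a (X - {b}) :: 'k::comm_ring_1))"
proof -
  define A where "A = card {t\<in>X. vorder t < vorder a}"
  define B where "B = card {t\<in>X. vorder t < vorder b}"
  have e1: "{t\<in>X - {a}. vorder t < vorder b} = {t\<in>X. vorder t < vorder b}"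
    using assms by auto
  have e2: "{t\<in>X - {b}. vorder t < vorder a} = {t\<in>X. vorder t < vorder a} - {b}"
    by auto
  have bin: "b \<in> {t\<in>X. vorder t < vorder a}" using assms by auto
  have c2: "card {t\<in>X - {b}. vorder t < vorder a} = A - 1"
    unfolding e2 A_def using bin by (simp add: card_Diff_singleton)
  have A1: "A = Suc (A - 1)"
    unfolding A_def using bin by (metis (no_types, lifting) Suc_pred' card_gt_0_iff emptyE finite)
  show ?thesis
    unfolding ksign_def e1 c2 apply (fold B_def A_def)
    apply (subst (1) A1) by simp
qed

lemma ksign_swap:
  fixes X :: "'v::finite set"
  assumes "a \<in> X" "b \<in> X" "a \<noteq> b"
  shows "ksign a X * ksign b (X - {a}) = - (ksign b X * (ksign a (X - {b}) :: 'k::comm_ring_1))"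
proof (cases "vorder b < vorder a")
  case True then show ?thesis using ksign_swap_lt assms by blast
next
  case False
  then have "vorder a < vorder b" using assms inj_vorder
    by (metis injD linorder_neqE_nat)
  then have "ksign b X * ksign a (X - {b}) = - (ksign a X * (ksign b (X - {a}) :: 'k))"
    using ksign_swap_lt assms by blast
  then show ?thesis by simp
qed

definition cob :: "('v::finite set \<Rightarrow> 'k::comm_ring_1) \<Rightarrow> 'v set \<Rightarrow> 'k" where
  "cob a F = (\<Sum>s\<in>F. ksign s F * a (F - {s}))"

definition bd :: "('v::finite set \<Rightarrow> 'k::comm_ring_1) \<Rightarrow> 'v set \<Rightarrow> 'k" where
  "bd g T = (\<Sum>s\<in>UNIV - T. ksign s (insert s T) * g (insert s T))"

lemma pair_cancel:
  fixes f :: "'a \<Rightarrow> 'a \<Rightarrow> 'k::comm_ring_1"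
  assumes "finite A" "\<And>s t. s \<in> A \<Longrightarrow> t \<in> A \<Longrightarrow> s \<noteq> t \<Longrightarrow> f s t = - f t s"
  shows "(\<Sum>s\<in>A. \<Sum>t\<in>A - {s}. f s t) = 0"
  using assms
proof (induction A rule: finite_induct)
  case empty then show ?case by simp
next
  case (insert a A)
  have "(\<Sum>s\<in>insert a A. \<Sum>t\<in>insert a A - {s}. f s t)
      = (\<Sum>t\<in>A. f a t) + (\<Sum>s\<in>A. \<Sum>t\<in>insert a A - {s}. f s t)"
    using insert.hyps by (simp add: sum.insert)
  also have "(\<Sum>s\<in>A. \<Sum>t\<in>insert a A - {s}. f s t) = (\<Sum>s\<in>A. f s a + (\<Sum>t\<in>A - {s}. f s t))"
  proof (rule sum.cong[OF refl])
    fix s assume "s \<in> A"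
    then have "insert a A - {s} = insert a (A - {s})" using insert.hyps by auto
    then show "(\<Sum>t\<in>insert a A - {s}. f s t) = f s a + (\<Sum>t\<in>A - {s}. f s t)"
      using insert.hyps by (simp add: sum.insert)
  qed
  also have "\<dots> = (\<Sum>s\<in>A. f s a) + 0"
  proof -
    have "(\<Sum>s\<in>A. \<Sum>t\<in>A - {s}. f s t) = 0"
      using insert.IH insert.prems by blast
    then show ?thesis by (simp add: sum.distrib)
  qed
  also have "(\<Sum>t\<in>A. f a t) + \<dots> = (\<Sum>t\<in>A. f a t + f t a)"
    by (simp add: sum.distrib)
  also have "\<dots> = 0"
  proof (intro sum.neutral ballI)
    fix t assume t: "t \<in> A"
    then have "a \<noteq> t" using insert.hyps by auto
    then have "f a t = - f t a" using insert.prems t by blast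
    then show "f a t + f t a = 0" by simp
  qed
  finally show ?case .
qed

lemma cob_cob: "cob (cob a) F = (0::'k::comm_ring_1)"
proof -
  have "cob (cob a) F = (\<Sum>s\<in>F. \<Sum>t\<in>F - {s}. ksign s F * (ksign t (F - {s}) * a (F - {s} - {t})))"
    unfolding cob_def by (simp add: sum_distrib_left)
  also have "\<dots> = 0"
  proof (rule pair_cancel)
    fix s t assume st: "s \<in> F" "t \<in> F" "s \<noteq> t"
    have e: "F - {s} - {t} = F - {t} - {s}" by auto
    have "ksign s F * ksign t (F - {s}) = - (ksign t F * (ksign s (F - {t}) :: 'k))"
      using ksign_swap st by blast
    then show "ksign s F * (ksign t (F - {s}) * a (F - {s} - {t})) =
          - (ksign t F * (ksign s (F - {t}) * a (F - {t} - {s})))"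
      unfolding e by (simp add: mult.assoc[symmetric])
  qed simp
  finally show ?thesis .
qed

lemma bd_bd: "bd (bd g) T = (0::'k::comm_ring_1)"
proof -
  have "bd (bd g) T = (\<Sum>s\<in>UNIV - T. \<Sum>t\<in>(UNIV - T) - {s}.
      ksign s (insert s T) * (ksign t (insert t (insert s T)) * g (insert t (insert s T))))"
    unfolding bd_def sum_distrib_left
    by (intro sum.cong refl) (metis Diff_insert)
  also have "\<dots> = 0"
  proof (rule pair_cancel)
    fix s t assume st: "s \<in> UNIV - T" "t \<in> UNIV - T" "s \<noteq> t"
    define X where "X = insert t (insert s T)"
    have x1: "X - {t} = insert s T" "X - {s} = insert t T" using st unfolding X_def by auto
    have x2: "insert s (insert t T) = X" unfolding X_def by auto
    have "ksign t X * ksign s (X - {t}) = - (ksign s X * (ksign t (X - {s}) :: 'k))"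
      using ksign_swap st unfolding X_def by (metis insertI1 insertI2)
    then show "ksign s (insert s T) * (ksign t (insert t (insert s T)) * g (insert t (insert s T))) =
        - (ksign t (insert t T) * (ksign s (insert s (insert t T)) * g (insert s (insert t T))))"
    proof -
      assume h: "ksign t X * ksign s (X - {t}) = - (ksign s X * (ksign t (X - {s}) :: 'k))"
      have "ksign s (insert s T) * (ksign t X * g X) = (ksign t X * ksign s (X - {t})) * g X"
        unfolding x1 by (simp only: mult.assoc mult.commute mult.left_commute)
      also have "\<dots> = (- (ksign s X * ksign t (X - {s}))) * g X"
        by (simp only: h)
      also have "\<dots> = - (ksign t (insert t T) * (ksign s X * g X))"
        unfolding x1 by (simp only: mult.assoc mult.commute mult.left_commute mult_minus_left mult_minus_right)
      finally show ?thesis unfolding x2 X_def[symmetric] .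
    qed
  qed simp
  finally show ?thesis .
qed


lemma sign_flip:
  fixes X :: "'v::finite set"
  assumes "x \<in> X" "s \<in> X" "s \<noteq> x"
  shows "ksign s (X - {x}) * ksign x (X - {s}) = - (ksign x X * (ksign s X :: 'k::comm_ring_1))"
proof -
  define p where "p = (ksign s X :: 'k)"
  define q where "q = (ksign x (X - {s}) :: 'k)"
  define r where "r = (ksign x X :: 'k)"
  define u where "u = (ksign s (X - {x}) :: 'k)"
  have h: "p * q = - (r * u)" unfolding p_def q_def r_def u_def using ksign_swap assms by blast
  have pp: "p * p = 1" "u * u = 1" unfolding p_def u_def by (rule ksign_sq)+
  have "u * q = (p * p) * (u * q)" using pp by simp
  also have "\<dots> = (p * q) * (u * p)" by (simp only: mult.assoc mult.commute mult.left_commute)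
  also have "\<dots> = (- (r * u)) * (u * p)" by (simp only: h)
  also have "\<dots> = - (r * p) * (u * u)" by (simp only: mult.assoc mult.commute mult.left_commute mult_minus_left mult_minus_right)
  also have "\<dots> = - (r * p)" using pp by simp
  finally show ?thesis unfolding p_def q_def r_def u_def .
qed

definition cocyc :: "'v::finite set set \<Rightarrow> nat \<Rightarrow> ('v set \<Rightarrow> 'k::comm_ring_1) \<Rightarrow> bool" where
  "cocyc K k b \<longleftrightarrow> (\<forall>F\<in>K. card F = Suc k \<longrightarrow> cob b F = 0)"

definition cobdry :: "'v::finite set set \<Rightarrow> nat \<Rightarrow> ('v set \<Rightarrow> 'k::comm_ring_1) \<Rightarrow> bool" where
  "cobdry K k b \<longleftrightarrow> (\<exists>a. \<forall>F\<in>K. card F = k \<longrightarrow> b F = cob a F)"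

lemma cob_diff: "cob (\<lambda>G. f G - g G) F = cob f F - cob g F"
  unfolding cob_def by (simp add: right_diff_distrib sum_subtractf)

lemma cob_add: "cob (\<lambda>G. f G + g G) F = cob f F + cob g F"
  unfolding cob_def by (simp add: distrib_left sum.distrib)

lemma cone_acyc:
  fixes b :: "'v::finite set \<Rightarrow> 'k::comm_ring_1"
  assumes cone: "\<And>F. F \<in> K \<Longrightarrow> insert v F \<in> K" and cc: "cocyc K k b"
  shows "cobdry K k b"
proof -
  define a where "a = (\<lambda>G. if v \<in> G then 0 else ksign v (insert v G) * b (insert v G))"
  have "b F = cob a F" if F: "F \<in> K" "card F = k" for F
  proof (cases "v \<in> F")
    case True
    have "cob a F = ksign v F * a (F - {v}) + (\<Sum>s\<in>F - {v}. ksign s F * a (F - {s}))"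
      unfolding cob_def using True by (simp add: sum.remove)
    also have "(\<Sum>s\<in>F - {v}. ksign s F * a (F - {s})) = 0"
      using True by (intro sum.neutral) (auto simp: a_def)
    also have "a (F - {v}) = ksign v F * b F"
      using True by (simp add: a_def insert_absorb)
    finally show ?thesis by (simp add: mult.assoc[symmetric] ksign_sq)
  next
    case False
    define X where "X = insert v F"
    have XK: "X \<in> K" "card X = Suc k" using cone F False unfolding X_def by auto
    have XF: "X - {v} = F" using False unfolding X_def by auto
    have "0 = cob b X" using cc XK unfolding cocyc_def by auto
    also have "\<dots> = ksign v X * b F + (\<Sum>s\<in>F. ksign s X * b (X - {s}))"
      unfolding cob_def X_def using False by (simp add: sum.insert XF[unfolded X_def])
    finally have eq: "ksign v X * b F = - (\<Sum>s\<in>F. ksign s X * b (X - {s}))"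
      by (simp add: eq_neg_iff_add_eq_0)
    have "cob a F = (\<Sum>s\<in>F. - (ksign v X * ksign s X) * b (X - {s}))"
      unfolding cob_def
    proof (intro sum.cong refl)
      fix s assume s: "s \<in> F"
      have ins: "insert v (F - {s}) = X - {s}" "v \<notin> F - {s}" using s False unfolding X_def by auto
      have "ksign s (X - {v}) * ksign v (X - {s}) = - (ksign v X * (ksign s X :: 'k))"
        using sign_flip[of v X s] s False unfolding X_def by auto
      then show "ksign s F * a (F - {s}) = - (ksign v X * ksign s X) * b (X - {s})"
        unfolding a_def using ins XF False by (simp add: mult.assoc[symmetric])
    qed
    also have "\<dots> = - (ksign v X * (\<Sum>s\<in>F. ksign s X * b (X - {s})))"
      by (simp add: sum_distrib_left mult.assoc sum_negf)
    also have "\<dots> = ksign v X * (ksign v X * b F)" using eq by simp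
    also have "\<dots> = b F" by (simp add: mult.assoc[symmetric] ksign_sq)
    finally show ?thesis by simp
  qed
  then show ?thesis unfolding cobdry_def by blast
qed


definition indep :: "('v \<Rightarrow> 'v \<Rightarrow> bool) \<Rightarrow> 'v set \<Rightarrow> bool" where
  "indep E F \<longleftrightarrow> (\<forall>u\<in>F. \<forall>v\<in>F. \<not> E u v)"

definition IndW :: "('v \<Rightarrow> 'v \<Rightarrow> bool) \<Rightarrow> 'v set \<Rightarrow> 'v set set" where
  "IndW E W = {F. F \<subseteq> W \<and> indep E F}"

definition clawW :: "nat \<Rightarrow> ('v \<Rightarrow> 'v \<Rightarrow> bool) \<Rightarrow> 'v set \<Rightarrow> bool" where
  "clawW n E W \<longleftrightarrow> \<not> (\<exists>v\<in>W. \<exists>S\<subseteq>W. card S = n \<and> (\<forall>s\<in>S. E v s) \<and> indep E S)"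

lemma clawW_mono: "W' \<subseteq> W \<Longrightarrow> clawW n E W \<Longrightarrow> clawW n E W'"
  unfolding clawW_def by blast

lemma cocyc_mono: "K' \<subseteq> K \<Longrightarrow> cocyc K k b \<Longrightarrow> cocyc K' k b"
  unfolding cocyc_def by blast

lemma claw_step:
  fixes E :: "'v::finite \<Rightarrow> 'v \<Rightarrow> bool"
  assumes sg: "simple_graph E" and gf: "gap_free E" and cw: "clawW (Suc m) E W" and m: "1 \<le> m"
    and x: "x \<in> W" and w: "w \<in> W" "E x w"
    and mx: "\<forall>y\<in>W. card {z\<in>W. E y z} \<le> card {z\<in>W. E x z}"
  shows "clawW m E (W - {x} - {z. E x z})"
proof (rule ccontr)
  assume "\<not> clawW m E (W - {x} - {z. E x z})"
  then obtain y Z where y: "y \<in> W - {x} - {z. E x z}" and Z: "Z \<subseteq> W - {x} - {z. E x z}"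
    "card Z = m" "\<forall>s\<in>Z. E y s" "indep E Z"
    unfolding clawW_def by blast
  have sym: "\<And>a b. E a b \<Longrightarrow> E b a" and irr: "\<And>a. \<not> E a a" using sg unfolding simple_graph_def by auto
  have sub: "{z\<in>W. E x z} \<subseteq> {z\<in>W. E y z}"
  proof
    fix u assume u: "u \<in> {z\<in>W. E x z}"
    show "u \<in> {z\<in>W. E y z}"
    proof (rule ccontr)
      assume nu: "u \<notin> {z\<in>W. E y z}"
      have uZ: "\<forall>z\<in>Z. E u z"
      proof
        fix z assume z: "z \<in> Z"
        have d: "{x, u} \<inter> {y, z} = {}" using y Z z u irr by auto
        have "E x y \<or> E x z \<or> E u y \<or> E u z"
          using gf d u y Z z unfolding gap_free_def by (metis (mono_tags, lifting) mem_Collect_eq)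
        then show "E u z" using y z Z u nu sym by auto
      qed
      have xZ: "x \<notin> Z" using Z by auto
      have "card (insert x Z) = Suc m" using xZ Z by simp
      moreover have "insert x Z \<subseteq> W" using Z x by auto
      moreover have "\<forall>s\<in>insert x Z. E u s" using uZ u sym by auto
      moreover have "indep E (insert x Z)" using Z sym irr unfolding indep_def by blast
      ultimately show False using cw u unfolding clawW_def by blast
    qed
  qed
  have "card {z\<in>W. E y z} \<le> card {z\<in>W. E x z}" using mx y by auto
  then have eq: "{z\<in>W. E x z} = {z\<in>W. E y z}" using sub card_mono[OF _ sub] by (intro card_subset_eq) auto
  obtain z where "z \<in> Z" using Z m by (metis card.empty ex_in_conv not_one_le_zero)
  then have "z \<in> {z\<in>W. E y z}" using Z by auto
  then have "E x z" using eq by auto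
  then show False using Z \<open>z \<in> Z\<close> by auto
qed


lemma claimB:
  fixes E :: "'v::finite \<Rightarrow> 'v \<Rightarrow> bool" and b :: "'v set \<Rightarrow> 'k::comm_ring_1"
  assumes sg: "simple_graph E" and gf: "gap_free E"
  shows "1 \<le> n \<Longrightarrow> clawW n E W \<Longrightarrow> n \<le> k \<Longrightarrow> cocyc (IndW E W) k b \<Longrightarrow> cobdry (IndW E W) k b"
proof (induction n arbitrary: W k b)
  case 0 then show ?case by simp
next
  case (Suc m)
  note outer = Suc.IH
  have sym: "\<And>a b. E a b \<Longrightarrow> E b a" and irr: "\<And>a. \<not> E a a" using sg unfolding simple_graph_def by auto
  from Suc.prems show ?case
  proof (induction "card W" arbitrary: W k b rule: less_induct)
    case less
    note inner = less.hyps
    have cw: "clawW (Suc m) E W" and kk: "Suc m \<le> k" and cc: "cocyc (IndW E W) k b"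
      using less.prems by auto
    show ?case
    proof (cases "\<exists>u\<in>W. \<exists>v\<in>W. E u v")
      case False
      then have IW: "IndW E W = {F. F \<subseteq> W}" unfolding IndW_def indep_def by blast
      show ?thesis
      proof (cases "W = {}")
        case True
        then show ?thesis unfolding cobdry_def IndW_def using kk by auto
      next
        case False
        then obtain w where "w \<in> W" by blast
        then show ?thesis using cone_acyc[of "IndW E W" w k b] cc IW by auto
      qed
    next
      case True
      then obtain u0 v0 where uv: "u0 \<in> W" "v0 \<in> W" "E u0 v0" by blast
      have m1: "1 \<le> m"
      proof (rule ccontr)
        assume "\<not> 1 \<le> m" then have "m = 0" by simp
        then have "card {v0} = Suc m \<and> {v0} \<subseteq> W \<and> (\<forall>s\<in>{v0}. E u0 s) \<and> indep E {v0}"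
          using uv irr unfolding indep_def by auto
        then show False using cw uv unfolding clawW_def by blast
      qed
      define f where "f = (\<lambda>y. card {z\<in>W. E y z})"
      have fin: "finite (f ` W)" "f ` W \<noteq> {}" using uv by auto
      obtain x where x: "x \<in> W" "f x = Max (f ` W)" using Max_in[OF fin] by auto
      have mx: "\<forall>y\<in>W. card {z\<in>W. E y z} \<le> card {z\<in>W. E x z}"
      proof
        fix y assume "y \<in> W"
        then have "f y \<le> Max (f ` W)" using fin by (intro Max_ge) auto
        then show "card {z\<in>W. E y z} \<le> card {z\<in>W. E x z}" using x unfolding f_def by simp
      qed
      have "0 < card {z\<in>W. E u0 z}" using uv by (auto simp: card_gt_0_iff)
      then have "0 < card {z\<in>W. E x z}" using mx uv by (meson order_less_le_trans)
      then obtain w where w: "w \<in> W" "E x w" by (auto simp: card_gt_0_iff)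
      define W1 where "W1 = W - {x}"
      define W2 where "W2 = W - {x} - {z. E x z}"
      have c1: "cobdry (IndW E W1) k b"
      proof (rule inner)
        show "card W1 < card W" unfolding W1_def using x(1) by (rule card_Diff1_less[OF finite])
        show "1 \<le> Suc m" "Suc m \<le> k" using kk by auto
        show "clawW (Suc m) E W1" by (rule clawW_mono[OF _ cw]) (auto simp: W1_def)
        show "cocyc (IndW E W1) k b" by (rule cocyc_mono[OF _ cc]) (auto simp: W1_def IndW_def)
      qed
      then obtain a1 where a1: "\<forall>F\<in>IndW E W1. card F = k \<longrightarrow> b F = cob a1 F"
        unfolding cobdry_def by blast
      define b' where "b' = (\<lambda>F. b F - cob a1 F)"
      have b'cc: "\<And>F. F \<in> IndW E W \<Longrightarrow> card F = Suc k \<Longrightarrow> cob b' F = 0"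
        using cc unfolding b'_def cocyc_def by (simp add: cob_diff cob_cob)
      have b'0: "\<And>F. F \<in> IndW E W \<Longrightarrow> card F = k \<Longrightarrow> x \<notin> F \<Longrightarrow> b' F = 0"
        using a1 unfolding b'_def IndW_def W1_def by auto
      define c where "c = (\<lambda>G. ksign x (insert x G) * b' (insert x G))"
      have k1: "1 \<le> k" using kk by simp
      have ccc: "cocyc (IndW E W2) (k - 1) c"
        unfolding cocyc_def
      proof (intro ballI impI)
        fix H assume H: "H \<in> IndW E W2" "card H = Suc (k - 1)"
        then have Hk: "card H = k" using k1 by simp
        define X where "X = insert x H"
        have xH: "x \<notin> H" using H unfolding IndW_def W2_def by auto
        have HX: "X - {x} = H" unfolding X_def using xH by auto
        have XI: "X \<in> IndW E W" using H x sym irr unfolding X_def IndW_def W2_def indep_def by blast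
        have Xc: "card X = Suc k" unfolding X_def using xH Hk by simp
        have HI: "H \<in> IndW E W" using H unfolding IndW_def W2_def by auto
        have "0 = cob b' X" using b'cc XI Xc by simp
        also have "\<dots> = ksign x X * b' H + (\<Sum>s\<in>H. ksign s X * b' (X - {s}))"
          unfolding cob_def X_def using xH by (simp add: sum.insert HX[unfolded X_def])
        also have "b' H = 0" using b'0 HI Hk xH by simp
        finally have S0: "(\<Sum>s\<in>H. ksign s X * b' (X - {s})) = 0" by simp
        have "cob c H = (\<Sum>s\<in>H. - (ksign x X * ksign s X) * b' (X - {s}))"
          unfolding cob_def
        proof (intro sum.cong refl)
          fix s assume s: "s \<in> H"
          have ins: "insert x (H - {s}) = X - {s}" using s xH unfolding X_def by auto
          have "ksign s (X - {x}) * ksign x (X - {s}) = - (ksign x X * (ksign s X :: 'k))"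
            using sign_flip[of x X s] s xH unfolding X_def by auto
          then have sg: "ksign s H * ksign x (X - {s}) = - (ksign x X * (ksign s X :: 'k))"
            unfolding HX .
          show "ksign s H * c (H - {s}) = - (ksign x X * ksign s X) * b' (X - {s})"
            unfolding c_def ins using sg by (simp add: mult.assoc[symmetric])
        qed
        also have "\<dots> = - (ksign x X * (\<Sum>s\<in>H. ksign s X * b' (X - {s})))"
          by (simp add: sum_distrib_left mult.assoc sum_negf)
        also have "\<dots> = 0" using S0 by simp
        finally show "cob c H = 0" .
      qed
      have c2: "cobdry (IndW E W2) (k - 1) c"
      proof (rule outer)
        show "1 \<le> m" by (rule m1)
        show "m \<le> k - 1" using kk by simp
        show "clawW m E W2" unfolding W2_def
          using claw_step[OF sg gf cw m1 x(1) w mx] .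
        show "cocyc (IndW E W2) (k - 1) c" by (rule ccc)
      qed
      then obtain a2 where a2: "\<forall>H\<in>IndW E W2. card H = k - 1 \<longrightarrow> c H = cob a2 H"
        unfolding cobdry_def by blast
      define a3 where "a3 = (\<lambda>G. if x \<in> G then - (ksign x G * a2 (G - {x})) else 0)"
      have b'a3: "b' F = cob a3 F" if F: "F \<in> IndW E W" "card F = k" for F
      proof (cases "x \<in> F")
        case False
        then have "cob a3 F = 0" unfolding cob_def a3_def by (intro sum.neutral) auto
        then show ?thesis using b'0 F False by simp
      next
        case True
        define H where "H = F - {x}"
        have HI: "H \<in> IndW E W2" using F True sym unfolding H_def IndW_def W2_def indep_def by blast
        have Hk: "card H = k - 1" using F True unfolding H_def by simp
        have FH: "insert x H = F" using True unfolding H_def by auto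
        have "cob a3 F = ksign x F * a3 (F - {x}) + (\<Sum>s\<in>H. ksign s F * a3 (F - {s}))"
          unfolding cob_def H_def using True by (simp add: sum.remove)
        also have "a3 (F - {x}) = 0" unfolding a3_def by simp
        also have "(\<Sum>s\<in>H. ksign s F * a3 (F - {s})) = (\<Sum>s\<in>H. ksign x F * (ksign s H * a2 (H - {s})))"
        proof (intro sum.cong refl)
          fix s assume s: "s \<in> H"
          have e: "F - {s} - {x} = H - {s}" unfolding H_def by auto
          have xs: "x \<in> F - {s}" using s True unfolding H_def by auto
          have "ksign s F * ksign x (F - {s}) = - (ksign x F * (ksign s (F - {x}) :: 'k))"
            using ksign_swap[of s F x] s True unfolding H_def by auto
          then show "ksign s F * a3 (F - {s}) = ksign x F * (ksign s H * a2 (H - {s}))"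
            unfolding a3_def using xs e by (simp add: mult.assoc[symmetric] H_def)
        qed
        also have "\<dots> = ksign x F * cob a2 H" unfolding cob_def by (simp add: sum_distrib_left)
        also have "cob a2 H = c H" using a2 HI Hk by simp
        also have "ksign x F * c H = b' F" unfolding c_def FH by (simp add: mult.assoc[symmetric] ksign_sq)
        finally show ?thesis by simp
      qed
      show ?thesis unfolding cobdry_def
      proof (intro exI[of _ "\<lambda>G. a1 G + a3 G"] ballI impI)
        fix F assume F: "F \<in> IndW E W" "card F = k"
        show "b F = cob (\<lambda>G. a1 G + a3 G) F"
          using b'a3[OF F] unfolding cob_add b'_def by (simp add: algebra_simps)
      qed
    qed
  qed
qed


lemma cob_zero: "cob (\<lambda>G. 0) F = (0::'k::comm_ring_1)"
  unfolding cob_def by simp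

lemma relative_step:
  fixes E :: "'v::finite \<Rightarrow> 'v \<Rightarrow> bool" and a :: "'v set \<Rightarrow> 'k::comm_ring_1"
  assumes sg: "simple_graph E" and gf: "gap_free E" and n1: "1 \<le> n" and cw: "clawW n E W"
    and sup: "\<And>F. a F \<noteq> 0 \<Longrightarrow> F \<subseteq> W \<and> card F = f \<and> \<not> indep E F"
    and cyc: "\<And>F. F \<subseteq> W \<Longrightarrow> cob a F = 0"
    and fn: "n + 1 \<le> f"
  shows "\<exists>a'. (\<forall>F. a' F \<noteq> 0 \<longrightarrow> F \<subseteq> W \<and> card F = f - 1 \<and> \<not> indep E F) \<and>
              (\<forall>F. F \<subseteq> W \<longrightarrow> cob a' F = a F)"
proof (cases "W = {}")
  case True
  have "a F = 0" for F
  proof (rule ccontr)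
    assume "a F \<noteq> 0"
    then have "F \<subseteq> W" "card F = f" using sup by auto
    then show False using True fn by auto
  qed
  then show ?thesis by (intro exI[of _ "\<lambda>G. 0"]) (simp add: cob_zero)
next
  case False
  then obtain w where w: "w \<in> W" by blast
  have "cocyc {F. F \<subseteq> W} f a" unfolding cocyc_def using cyc by auto
  then have "cobdry {F. F \<subseteq> W} f a" using cone_acyc[of "{F. F \<subseteq> W}" w f a] w by auto
  then obtain b1 where b1: "\<And>F. F \<subseteq> W \<Longrightarrow> card F = f \<Longrightarrow> a F = cob b1 F"
    unfolding cobdry_def by auto
  have "cocyc (IndW E W) (f - 1) b1"
    unfolding cocyc_def
  proof (intro ballI impI)
    fix F assume F: "F \<in> IndW E W" "card F = Suc (f - 1)"
    then have "card F = f" using fn by simp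
    then have "cob b1 F = a F" using b1 F unfolding IndW_def by auto
    also have "a F = 0" using sup F unfolding IndW_def by auto
    finally show "cob b1 F = 0" .
  qed
  moreover have "n \<le> f - 1" using fn by simp
  ultimately have "cobdry (IndW E W) (f - 1) b1"
    using claimB[OF sg gf n1 cw] by blast
  then obtain a2 where a2: "\<And>F. F \<in> IndW E W \<Longrightarrow> card F = f - 1 \<Longrightarrow> b1 F = cob a2 F"
    unfolding cobdry_def by auto
  define a' where "a' = (\<lambda>F. if F \<subseteq> W \<and> card F = f - 1 \<and> \<not> indep E F then b1 F - cob a2 F else 0)"
  have P1: "\<forall>F. a' F \<noteq> 0 \<longrightarrow> F \<subseteq> W \<and> card F = f - 1 \<and> \<not> indep E F"
    unfolding a'_def by (auto split: if_splits)
  have P2: "\<forall>F. F \<subseteq> W \<longrightarrow> cob a' F = a F"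
  proof (intro allI impI)
    fix F assume FW: "F \<subseteq> W"
    show "cob a' F = a F"
    proof (cases "card F = f")
      case True
      have "cob a' F = cob (\<lambda>G. b1 G - cob a2 G) F"
        unfolding cob_def[of a'] cob_def[of "\<lambda>G. b1 G - cob a2 G"]
      proof (intro sum.cong refl)
        fix s assume s: "s \<in> F"
        have c: "card (F - {s}) = f - 1" using s True by simp
        have "a' (F - {s}) = b1 (F - {s}) - cob a2 (F - {s})"
        proof (cases "indep E (F - {s})")
          case True
          then have "F - {s} \<in> IndW E W" using FW unfolding IndW_def by auto
          then show ?thesis using a2 c True unfolding a'_def by simp
        next
          case False
          then show ?thesis using FW c unfolding a'_def by auto
        qed
        then show "ksign s F * a' (F - {s}) = ksign s F * (b1 (F - {s}) - cob a2 (F - {s}))" by simp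
      qed
      also have "\<dots> = a F" using b1[OF FW True] by (simp add: cob_diff cob_cob)
      finally show ?thesis .
    next
      case False
      then have aF: "a F = 0" using sup by blast
      have "cob a' F = 0" unfolding cob_def
      proof (intro sum.neutral ballI)
        fix s assume s: "s \<in> F"
        have cF: "1 \<le> card F" using s by (auto simp: card_gt_0_iff Suc_le_eq)
        have "card (F - {s}) = card F - 1" using s by simp
        then have "card (F - {s}) \<noteq> f - 1" using False fn cF by linarith
        then show "ksign s F * a' (F - {s}) = 0" unfolding a'_def by simp
      qed
      then show ?thesis using aF by simp
    qed
  qed
  show ?thesis using P1 P2 by blast
qed

definition rho :: "'v::finite set \<Rightarrow> 'v set \<Rightarrow> 'k::comm_ring_1" where
  "rho W F = (\<Prod>t\<in>F. ksign t W)"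

lemma rho_remove: "s \<in> F \<Longrightarrow> rho W F = rho W (F - {s}) * (ksign s W :: 'k::comm_ring_1)"
  unfolding rho_def by (simp add: prod.remove mult.commute)

lemma rho_sq: "rho W F * rho W F = (1::'k::comm_ring_1)"
  unfolding rho_def by (simp add: prod.distrib[symmetric] ksign_sq)

lemma ksign_compl:
  fixes T W :: "'v::finite set"
  assumes "T \<subseteq> W" "s \<in> W - T"
  shows "ksign s (insert s T) = ksign s (W - T) * (ksign s W :: 'k::comm_ring_1)"
proof -
  have e1: "{t\<in>insert s T. vorder t < vorder s} = {t\<in>T. vorder t < vorder s}" by auto
  have e2: "{t\<in>W. vorder t < vorder s} = {t\<in>T. vorder t < vorder s} \<union> {t\<in>W - T. vorder t < vorder s}"
    using assms by auto
  have c: "card {t\<in>W. vorder t < vorder s} = card {t\<in>T. vorder t < vorder s} + card {t\<in>W - T. vorder t < vorder s}"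
    unfolding e2 by (rule card_Un_disjoint) auto
  define A where "A = card {t\<in>T. vorder t < vorder s}"
  define B where "B = card {t\<in>W - T. vorder t < vorder s}"
  have "((-1::'k) ^ B) * (-1) ^ (A + B) = (-1) ^ A * ((-1) ^ B * (-1) ^ B)"
    by (simp add: power_add mult_ac)
  also have "\<dots> = (-1) ^ A" by (simp flip: power_mult_distrib)
  finally show ?thesis unfolding ksign_def e1 c by (simp add: A_def B_def)
qed

lemma TR:
  fixes \<chi> :: "'v::finite set \<Rightarrow> 'k::comm_ring_1"
  assumes sup: "\<And>S. \<chi> S \<noteq> 0 \<Longrightarrow> S \<subseteq> W" and TW: "T \<subseteq> W"
  shows "rho W (W - T) * bd \<chi> T = cob (\<lambda>G. if G \<subseteq> W then rho W G * \<chi> (W - G) else 0) (W - T)"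
proof -
  have "bd \<chi> T = (\<Sum>s\<in>W - T. ksign s (insert s T) * \<chi> (insert s T))"
    unfolding bd_def
  proof (rule sum.mono_neutral_right)
    show "W - T \<subseteq> UNIV - T" by auto
    show "\<forall>s\<in>UNIV - T - (W - T). ksign s (insert s T) * \<chi> (insert s T) = 0"
    proof
      fix s assume "s \<in> UNIV - T - (W - T)"
      then have "\<not> insert s T \<subseteq> W" by auto
      then have "\<chi> (insert s T) = 0" using sup by blast
      then show "ksign s (insert s T) * \<chi> (insert s T) = 0" by simp
    qed
  qed simp
  then have "rho W (W - T) * bd \<chi> T = (\<Sum>s\<in>W - T. rho W (W - T) * ksign s (insert s T) * \<chi> (insert s T))"
    by (simp add: sum_distrib_left mult.assoc)
  also have "\<dots> = cob (\<lambda>G. if G \<subseteq> W then rho W G * \<chi> (W - G) else 0) (W - T)"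
    unfolding cob_def
  proof (intro sum.cong refl)
    fix s assume s: "s \<in> W - T"
    define F where "F = W - T"
    have e: "W - (F - {s}) = insert s T" using TW s unfolding F_def by auto
    have sub: "F - {s} \<subseteq> W" unfolding F_def by auto
    have r: "rho W F = rho W (F - {s}) * (ksign s W :: 'k)" using s rho_remove unfolding F_def by blast
    have k: "ksign s (insert s T) = ksign s F * (ksign s W :: 'k)" using ksign_compl[OF TW s] unfolding F_def .
    have "rho W F * ksign s (insert s T) = rho W (F - {s}) * ksign s F * (ksign s W * (ksign s W :: 'k))"
      unfolding r k by (simp only: mult.assoc mult.commute mult.left_commute)
    also have "\<dots> = ksign s F * rho W (F - {s})" by (simp add: ksign_sq mult.commute)
    finally have "rho W F * ksign s (insert s T) * \<chi> (insert s T) = ksign s F * (rho W (F - {s}) * \<chi> (W - (F - {s})))"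
      unfolding e by (simp add: mult.assoc)
    then show "rho W (W - T) * ksign s (insert s T) * \<chi> (insert s T) =
      ksign s (W - T) * (if W - T - {s} \<subseteq> W then rho W (W - T - {s}) * \<chi> (W - (W - T - {s})) else 0)"
      using sub unfolding F_def by simp
  qed
  finally show ?thesis .
qed


definition indS :: "'v::finite set \<Rightarrow> 'v \<Rightarrow>\<^sub>0 nat" where
  "indS S = (\<Sum>t\<in>S. Poly_Mapping.single t 1)"

lemma lookup_indS: "Poly_Mapping.lookup (indS S) v = (if v \<in> S then 1 else 0)"
  unfolding indS_def lookup_sum by (simp add: lookup_single when_def)

definition hasE :: "('v \<Rightarrow> 'v \<Rightarrow> bool) \<Rightarrow> ('v \<Rightarrow>\<^sub>0 nat) \<Rightarrow> bool" where
  "hasE E m \<longleftrightarrow> (\<exists>u v. E u v \<and> 0 < Poly_Mapping.lookup m u \<and> 0 < Poly_Mapping.lookup m v)"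

definition valid :: "('v::finite \<Rightarrow> 'v \<Rightarrow> bool) \<Rightarrow> ('v \<Rightarrow>\<^sub>0 nat) \<Rightarrow> 'v set \<Rightarrow> bool" where
  "valid E \<alpha> S \<longleftrightarrow> (\<forall>s\<in>S. 0 < Poly_Mapping.lookup \<alpha> s) \<and> hasE E (\<alpha> - indS S)"

lemma mon_deg_univ: "mon_deg (m :: 'v::finite \<Rightarrow>\<^sub>0 nat) = (\<Sum>v\<in>UNIV. Poly_Mapping.lookup m v)"
  unfolding mon_deg_def
  by (rule sum.mono_neutral_left) (auto simp: in_keys_iff)

lemma clawW_of:
  fixes E :: "'v::finite \<Rightarrow> 'v \<Rightarrow> bool"
  assumes "claw_free n E" shows "clawW n E W"
  unfolding clawW_def
proof
  assume "\<exists>v\<in>W. \<exists>S\<subseteq>W. card S = n \<and> (\<forall>s\<in>S. E v s) \<and> indep E S"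
  then obtain v S where S: "card S = n" "\<forall>s\<in>S. E v s" "indep E S" by blast
  have "finite S \<and> card S = n \<and> (\<forall>s\<in>S. E v s) \<and> (\<forall>s\<in>S. \<forall>t\<in>S. \<not> E s t)"
    using S unfolding indep_def by simp
  then show False using assms unfolding claw_free_def by blast
qed

lemma valid_insert:
  assumes "2 \<le> Poly_Mapping.lookup \<alpha> v" "v \<notin> S" "valid E \<alpha> S"
  shows "valid E \<alpha> (insert v S)"
proof -
  have pos: "\<And>u. 0 < Poly_Mapping.lookup (\<alpha> - indS S) u \<Longrightarrow> 0 < Poly_Mapping.lookup (\<alpha> - indS (insert v S)) u"
    using assms(1,2) by (auto simp: lookup_minus lookup_indS split: if_splits)
  show ?thesis using assms pos unfolding valid_def hasE_def by auto
qed

lemma sign_flip2: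
  fixes X :: "'v::finite set"
  assumes "a \<in> X" "b \<in> X" "a \<noteq> b"
  shows "ksign a X * ksign b X = - (ksign b (X - {a}) * (ksign a (X - {b}) :: 'k::comm_ring_1))"
proof -
  define p where "p = (ksign a X :: 'k)"
  define q where "q = (ksign b (X - {a}) :: 'k)"
  define r where "r = (ksign b X :: 'k)"
  define u where "u = (ksign a (X - {b}) :: 'k)"
  have h: "p * q = - (r * u)" unfolding p_def q_def r_def u_def using ksign_swap assms by blast
  have pp: "q * q = 1" "r * r = 1" unfolding q_def r_def by (rule ksign_sq)+
  have "p * r = p * ((q * q) * r)" using pp by simp
  also have "\<dots> = (p * q) * (q * r)" by (simp only: mult.assoc)
  also have "\<dots> = (- (r * u)) * (q * r)" by (simp only: h)
  also have "\<dots> = - (q * u) * (r * r)" by (simp only: mult.assoc mult.commute mult.left_commute mult_minus_left mult_minus_right)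
  also have "\<dots> = - (q * u)" using pp by simp
  finally show ?thesis unfolding p_def q_def r_def u_def .
qed

lemma scalar_nonsqfree:
  fixes \<gamma> :: "'v::finite set \<Rightarrow> 'k::comm_ring_1"
  assumes v: "2 \<le> Poly_Mapping.lookup \<alpha> v"
    and hyp: "\<And>S. \<gamma> S \<noteq> 0 \<Longrightarrow> card S = i \<and> valid E \<alpha> S"
    and cyc: "\<And>T. bd \<gamma> T = 0"
  shows "\<exists>\<beta>. (\<forall>S. \<beta> S \<noteq> 0 \<longrightarrow> card S = Suc i \<and> valid E \<alpha> S) \<and> (\<forall>T. bd \<beta> T = \<gamma> T)"
proof -
  define \<beta> where "\<beta> = (\<lambda>S. if v \<in> S then ksign v S * \<gamma> (S - {v}) else 0)"
  have P1: "\<forall>S. \<beta> S \<noteq> 0 \<longrightarrow> card S = Suc i \<and> valid E \<alpha> S"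
  proof (intro allI impI)
    fix S assume "\<beta> S \<noteq> 0"
    then have vS: "v \<in> S" and g: "\<gamma> (S - {v}) \<noteq> 0" unfolding \<beta>_def by (auto split: if_splits)
    have c: "card (S - {v}) = i" and vl: "valid E \<alpha> (S - {v})" using hyp[OF g] by auto
    have ins: "insert v (S - {v}) = S" using vS by auto
    have "valid E \<alpha> (insert v (S - {v}))" by (rule valid_insert[OF v _ vl]) simp
    then have "valid E \<alpha> S" unfolding ins .
    moreover have "card S = Suc i" using card_Suc_Diff1[OF finite vS] c by simp
    ultimately show "card S = Suc i \<and> valid E \<alpha> S" by simp
  qed
  have P2: "bd \<beta> T = \<gamma> T" for T
  proof (cases "v \<in> T")
    case False
    have "bd \<beta> T = ksign v (insert v T) * \<beta> (insert v T) + (\<Sum>s\<in>UNIV - T - {v}. ksign s (insert s T) * \<beta> (insert s T))"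
      unfolding bd_def using False by (simp add: sum.remove)
    also have "(\<Sum>s\<in>UNIV - T - {v}. ksign s (insert s T) * \<beta> (insert s T)) = 0"
      using False by (intro sum.neutral) (auto simp: \<beta>_def)
    also have "\<beta> (insert v T) = ksign v (insert v T) * \<gamma> T"
      unfolding \<beta>_def using False by simp
    finally show ?thesis by (simp add: mult.assoc[symmetric] ksign_sq)
  next
    case True
    define T' where "T' = T - {v}"
    have UT: "UNIV - T' = insert v (UNIV - T)" "v \<notin> UNIV - T" using True unfolding T'_def by auto
    have iT: "insert v T' = T" using True unfolding T'_def by auto
    have "0 = bd \<gamma> T'" using cyc by simp
    also have "\<dots> = (\<Sum>s\<in>insert v (UNIV - T). ksign s (insert s T') * \<gamma> (insert s T'))"
      unfolding bd_def UT(1) ..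
    also have "\<dots> = ksign v (insert v T') * \<gamma> (insert v T') + (\<Sum>s\<in>UNIV - T. ksign s (insert s T') * \<gamma> (insert s T'))"
      by (rule sum.insert) (use True in auto)
    also have "\<dots> = ksign v T * \<gamma> T + (\<Sum>s\<in>UNIV - T. ksign s (insert s T') * \<gamma> (insert s T'))"
      unfolding iT ..
    finally have "ksign v T * \<gamma> T + (\<Sum>s\<in>UNIV - T. ksign s (insert s T') * \<gamma> (insert s T')) = 0"
      by (rule sym)
    then have eq: "ksign v T * \<gamma> T = - (\<Sum>s\<in>UNIV - T. ksign s (insert s T') * \<gamma> (insert s T'))"
      by (rule eq_neg_iff_add_eq_0[THEN iffD2])
    have "bd \<beta> T = (\<Sum>s\<in>UNIV - T. - (ksign v T * ksign s (insert s T')) * \<gamma> (insert s T'))"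
      unfolding bd_def
    proof (intro sum.cong refl)
      fix s assume s: "s \<in> UNIV - T"
      define X where "X = insert s T"
      have sv: "s \<noteq> v" using s True by auto
      have e: "X - {v} = insert s T'" "X - {s} = T" using s sv unfolding X_def T'_def by auto
      have "ksign s X * ksign v X = - (ksign v (X - {s}) * (ksign s (X - {v}) :: 'k))"
        using sign_flip2[of s X v] sv True unfolding X_def by auto
      then have sg: "ksign s X * ksign v X = - (ksign v T * (ksign s (insert s T') :: 'k))"
        unfolding e .
      have vX: "v \<in> X" using True unfolding X_def by simp
      have "\<beta> X = ksign v X * \<gamma> (X - {v})" unfolding \<beta>_def using vX by simp
      then have "\<beta> X = ksign v X * \<gamma> (insert s T')" unfolding e(1) .
      then show "ksign s (insert s T) * \<beta> (insert s T) = - (ksign v T * ksign s (insert s T')) * \<gamma> (insert s T')"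
        using sg unfolding X_def[symmetric] by (simp add: mult.assoc[symmetric])
    qed
    also have "\<dots> = - (ksign v T * (\<Sum>s\<in>UNIV - T. ksign s (insert s T') * \<gamma> (insert s T')))"
      by (simp add: sum_distrib_left mult.assoc sum_negf)
    also have "\<dots> = ksign v T * (ksign v T * \<gamma> T)" by (simp only: eq mult_minus_right)
    also have "\<dots> = \<gamma> T" by (simp add: mult.assoc[symmetric] ksign_sq)
    finally show ?thesis .
  qed
  show ?thesis using P1 P2 by blast
qed


lemma scalar_sqfree:
  fixes E :: "'v::finite \<Rightarrow> 'v \<Rightarrow> bool" and \<gamma> :: "'v set \<Rightarrow> 'k::comm_ring_1"
  assumes sg: "simple_graph E" and gf: "gap_free E" and n1: "1 \<le> n" and cf: "claw_free n E"
    and sq: "\<And>v. Poly_Mapping.lookup \<alpha> v \<le> 1"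
    and hyp: "\<And>S. \<gamma> S \<noteq> 0 \<Longrightarrow> card S = i \<and> valid E \<alpha> S"
    and deg: "i + n + 1 \<le> mon_deg \<alpha>"
    and cyc: "\<And>T. bd \<gamma> T = 0"
  shows "\<exists>\<beta>. (\<forall>S. \<beta> S \<noteq> 0 \<longrightarrow> card S = Suc i \<and> valid E \<alpha> S) \<and> (\<forall>T. bd \<beta> T = \<gamma> T)"
proof -
  define W where "W = {v. 0 < Poly_Mapping.lookup \<alpha> v}"
  have lk: "\<And>v. Poly_Mapping.lookup \<alpha> v = (if v \<in> W then 1 else 0)"
    using sq unfolding W_def by (metis (mono_tags) le_neq_implies_less less_one mem_Collect_eq not_gr_zero)
  have cW: "card W = mon_deg \<alpha>"
    unfolding mon_deg_univ lk by (simp add: sum.If_cases)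
  have vd: "valid E \<alpha> S \<longleftrightarrow> S \<subseteq> W \<and> \<not> indep E (W - S)" for S
  proof -
    have p: "0 < Poly_Mapping.lookup (\<alpha> - indS S) u \<longleftrightarrow> u \<in> W - S" for u
      by (simp add: lookup_minus lookup_indS lk)
    show ?thesis unfolding valid_def hasE_def p indep_def W_def by auto
  qed
  define f where "f = card W - i"
  have fn: "n + 1 \<le> f" using deg cW unfolding f_def by simp
  have gsup: "\<And>S. \<gamma> S \<noteq> 0 \<Longrightarrow> S \<subseteq> W" using hyp vd by blast
  define a where "a = (\<lambda>F. if F \<subseteq> W then rho W F * \<gamma> (W - F) else 0)"
  have asup: "F \<subseteq> W \<and> card F = f \<and> \<not> indep E F" if aF: "a F \<noteq> 0" for F
  proof -
    have FW: "F \<subseteq> W" and g: "\<gamma> (W - F) \<noteq> 0" using aF unfolding a_def by (auto split: if_splits)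
    have WWF: "W - (W - F) = F" using FW by auto
    have c: "card (W - F) = i" and v: "valid E \<alpha> (W - F)" using hyp[OF g] by auto
    have "card (W - F) = card W - card F" using FW by (simp add: card_Diff_subset)
    moreover have "card F \<le> card W" using FW by (simp add: card_mono)
    ultimately have "card F = f" using c unfolding f_def by linarith
    moreover have "\<not> indep E F" using v vd WWF by auto
    ultimately show ?thesis using FW by simp
  qed
  have acyc: "cob a F = 0" if FW: "F \<subseteq> W" for F
  proof -
    have WWF: "W - (W - F) = F" using FW by auto
    have "rho W (W - (W - F)) * bd \<gamma> (W - F) = cob a (W - (W - F))"
      unfolding a_def by (rule TR[OF gsup]) auto
    then show ?thesis using cyc unfolding WWF by simp
  qed
  obtain a' where a'1: "\<forall>F. a' F \<noteq> 0 \<longrightarrow> F \<subseteq> W \<and> card F = f - 1 \<and> \<not> indep E F"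
    and a'2: "\<forall>F. F \<subseteq> W \<longrightarrow> cob a' F = a F"
    using relative_step[OF sg gf n1 clawW_of[OF cf] asup acyc fn] by blast
  define \<beta> where "\<beta> = (\<lambda>S. if S \<subseteq> W then rho W (W - S) * a' (W - S) else 0)"
  have bsup: "S \<subseteq> W" if "\<beta> S \<noteq> 0" for S using that unfolding \<beta>_def by (auto split: if_splits)
  have P1: "card S = Suc i \<and> valid E \<alpha> S" if bS: "\<beta> S \<noteq> 0" for S
  proof -
    have SW: "S \<subseteq> W" and a'S: "a' (W - S) \<noteq> 0" using bS unfolding \<beta>_def by (auto split: if_splits)
    have c: "card (W - S) = f - 1" and ni: "\<not> indep E (W - S)" using a'1 a'S by auto
    have "card (W - S) = card W - card S" using SW by (simp add: card_Diff_subset)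
    moreover have "card S \<le> card W" using SW by (simp add: card_mono)
    ultimately have "card S = Suc i" using c fn unfolding f_def by linarith
    then show ?thesis using SW ni vd by simp
  qed
  have P2: "bd \<beta> T = \<gamma> T" for T
  proof (cases "T \<subseteq> W")
    case False
    have "\<gamma> T = 0" using gsup False by blast
    moreover have "bd \<beta> T = 0" unfolding bd_def
    proof (intro sum.neutral ballI)
      fix s assume "s \<in> UNIV - T"
      have "\<beta> (insert s T) = 0" using bsup False by blast
      then show "ksign s (insert s T) * \<beta> (insert s T) = 0" by simp
    qed
    ultimately show ?thesis by simp
  next
    case True
    have eqa: "(\<lambda>G. if G \<subseteq> W then rho W G * \<beta> (W - G) else 0) = a'"
    proof
      fix G show "(if G \<subseteq> W then rho W G * \<beta> (W - G) else 0) = a' G"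
      proof (cases "G \<subseteq> W")
        case True
        then have "W - (W - G) = G" by auto
        then have "\<beta> (W - G) = rho W G * a' G" unfolding \<beta>_def by simp
        then show ?thesis using True by (simp add: mult.assoc[symmetric] rho_sq)
      next
        case False
        then show ?thesis using a'1 by auto
      qed
    qed
    have WWT: "W - (W - T) = T" using True by auto
    have "rho W (W - T) * bd \<beta> T = cob a' (W - T)"
      using TR[of \<beta> W T] bsup True unfolding eqa by blast
    also have "\<dots> = a (W - T)" using a'2 by auto
    also have "\<dots> = rho W (W - T) * \<gamma> T" unfolding a_def WWT by simp
    finally have h: "rho W (W - T) * bd \<beta> T = rho W (W - T) * \<gamma> T" .
    have "bd \<beta> T = rho W (W - T) * (rho W (W - T) * bd \<beta> T)" by (simp add: mult.assoc[symmetric] rho_sq)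
    also have "\<dots> = \<gamma> T" unfolding h by (simp add: mult.assoc[symmetric] rho_sq)
    finally show ?thesis .
  qed
  show ?thesis using P1 P2 by blast
qed

lemma scalar_main:
  fixes E :: "'v::finite \<Rightarrow> 'v \<Rightarrow> bool" and \<gamma> :: "'v set \<Rightarrow> 'k::comm_ring_1"
  assumes sg: "simple_graph E" and gf: "gap_free E" and n1: "1 \<le> n" and cf: "claw_free n E"
    and hyp: "\<And>S. \<gamma> S \<noteq> 0 \<Longrightarrow> card S = i \<and> valid E \<alpha> S"
    and deg: "i + n + 1 \<le> mon_deg \<alpha>"
    and cyc: "\<And>T. bd \<gamma> T = 0"
  shows "\<exists>\<beta>. (\<forall>S. \<beta> S \<noteq> 0 \<longrightarrow> card S = Suc i \<and> valid E \<alpha> S) \<and> (\<forall>T. bd \<beta> T = \<gamma> T)"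
proof (cases "\<exists>v. 2 \<le> Poly_Mapping.lookup \<alpha> v")
  case True
  then obtain v where "2 \<le> Poly_Mapping.lookup \<alpha> v" by blast
  then show ?thesis using scalar_nonsqfree hyp cyc by blast
next
  case False
  have "Poly_Mapping.lookup \<alpha> v \<le> 1" for v
  proof -
    have "\<not> 2 \<le> Poly_Mapping.lookup \<alpha> v" using False by blast
    then show ?thesis by simp
  qed
  then show ?thesis using scalar_sqfree[OF sg gf n1 cf _ hyp deg cyc] by blast
qed


section \<open>Polynomial bridge\<close>

lemma single_mult_lookup:
  fixes a m :: "'v \<Rightarrow>\<^sub>0 nat" and p :: "('v \<Rightarrow>\<^sub>0 nat) \<Rightarrow>\<^sub>0 'k::comm_ring_1"
  shows "Poly_Mapping.lookup (Poly_Mapping.single a k * p) m =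
    (if (\<forall>v. Poly_Mapping.lookup a v \<le> Poly_Mapping.lookup m v) then k * Poly_Mapping.lookup p (m - a) else 0)"
proof -
  have "Poly_Mapping.lookup (Poly_Mapping.single a k * p) m =
      (\<Sum>l. (k when a = l) * (\<Sum>q. Poly_Mapping.lookup p q when m = l + q))"
    by (simp add: lookup_mult lookup_single)
  also have "\<dots> = (\<Sum>l. (k * (\<Sum>q. Poly_Mapping.lookup p q when m = l + q)) when a = l)"
    by (simp add: when_mult)
  also have "\<dots> = k * (\<Sum>q. Poly_Mapping.lookup p q when m = a + q)"
    by simp
  also have "(\<Sum>q. Poly_Mapping.lookup p q when m = a + q) =
    (if (\<forall>v. Poly_Mapping.lookup a v \<le> Poly_Mapping.lookup m v) then Poly_Mapping.lookup p (m - a) else 0)"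
  proof (cases "\<forall>v. Poly_Mapping.lookup a v \<le> Poly_Mapping.lookup m v")
    case True
    have "m = a + q \<longleftrightarrow> q = m - a" for q
    proof
      assume "m = a + q" then show "q = m - a" by simp
    next
      assume "q = m - a"
      then show "m = a + q" using True
        by (intro poly_mapping_eqI) (simp add: lookup_add lookup_minus)
    qed
    then show ?thesis using True by simp
  next
    case False
    have "m \<noteq> a + q" for q
    proof
      assume "m = a + q"
      then have "\<forall>v. Poly_Mapping.lookup a v \<le> Poly_Mapping.lookup m v" by (simp add: lookup_add)
      then show False using False by simp
    qed
    then have s0: "(\<Sum>q. (Poly_Mapping.lookup p q when m = a + q)) = 0" by simp
    show ?thesis by (simp only: if_not_P[OF False] s0)
  qed
  finally show ?thesis by simp
qed

lemma lookup_dterm: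
  fixes p :: "('v \<Rightarrow>\<^sub>0 nat) \<Rightarrow>\<^sub>0 'k::comm_ring_1"
  shows "Poly_Mapping.lookup (Poly_Mapping.single 0 k * Var s * p) m =
    (if 0 < Poly_Mapping.lookup m s then k * Poly_Mapping.lookup p (m - Poly_Mapping.single s 1) else 0)"
proof -
  have "Poly_Mapping.single 0 k * Var s = Poly_Mapping.single (Poly_Mapping.single s 1) k"
    unfolding Var_def by (simp add: mult_single)
  moreover have "(\<forall>v. Poly_Mapping.lookup (Poly_Mapping.single s (1::nat)) v \<le> Poly_Mapping.lookup m v) \<longleftrightarrow>
      0 < Poly_Mapping.lookup m s"
    by (auto simp: lookup_single when_def)
  ultimately show ?thesis by (simp add: single_mult_lookup)
qed


definition coef :: "('v::finite set \<Rightarrow> ('v, 'k::comm_ring_1) mpoly) \<Rightarrow> ('v \<Rightarrow>\<^sub>0 nat) \<Rightarrow> 'v set \<Rightarrow> 'k" where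
  "coef c \<alpha> S = (if (\<forall>s\<in>S. 0 < Poly_Mapping.lookup \<alpha> s) then Poly_Mapping.lookup (c S) (\<alpha> - indS S) else 0)"

lemma md_add: "mon_deg ((a::'v::finite \<Rightarrow>\<^sub>0 nat) + b) = mon_deg a + mon_deg b"
  unfolding mon_deg_univ by (simp add: lookup_add sum.distrib)

lemma md_indS: "mon_deg (indS (S::'v::finite set)) = card S"
  unfolding mon_deg_univ lookup_indS by (simp add: sum.If_cases)

lemma indS_cancel:
  assumes "\<forall>s\<in>S. 0 < Poly_Mapping.lookup \<alpha> s"
  shows "\<alpha> - indS S + indS S = \<alpha>"
  using assms by (intro poly_mapping_eqI) (auto simp: lookup_add lookup_minus lookup_indS)

lemma md_split:
  assumes "\<forall>s\<in>S. 0 < Poly_Mapping.lookup \<alpha> s"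
  shows "mon_deg \<alpha> = mon_deg (\<alpha> - indS S) + card (S::'v::finite set)"
  using indS_cancel[OF assms] md_add[of "\<alpha> - indS S" "indS S"] md_indS by simp

lemma K1: "Poly_Mapping.lookup (koszul_d c T) m = bd (coef c (m + indS T)) T"
  unfolding koszul_d_def bd_def lookup_sum
proof (intro sum.cong refl)
  fix s assume s: "s \<in> UNIV - T"
  define \<alpha> where "\<alpha> = m + indS T"
  have pos: "(\<forall>t\<in>insert s T. 0 < Poly_Mapping.lookup \<alpha> t) \<longleftrightarrow> 0 < Poly_Mapping.lookup m s"
    using s unfolding \<alpha>_def by (auto simp: lookup_add lookup_indS)
  have df: "\<alpha> - indS (insert s T) = m - Poly_Mapping.single s 1"
    using s unfolding \<alpha>_def
    by (intro poly_mapping_eqI) (auto simp: lookup_add lookup_minus lookup_indS lookup_single when_def)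
  show "Poly_Mapping.lookup (Poly_Mapping.single 0 (ksign s (insert s T)) * Var s * c (insert s T)) m =
        ksign s (insert s T) * coef c \<alpha> (insert s T)"
    unfolding lookup_dterm coef_def pos df by simp
qed

lemma K2: "coef (koszul_d c) \<alpha> T = bd (coef c \<alpha>) T"
proof (cases "\<forall>t\<in>T. 0 < Poly_Mapping.lookup \<alpha> t")
  case True
  then show ?thesis unfolding coef_def[of "koszul_d c"] K1 using indS_cancel[OF True] by simp
next
  case False
  then obtain t where t: "t \<in> T" "Poly_Mapping.lookup \<alpha> t = 0" by auto
  have "bd (coef c \<alpha>) T = 0" unfolding bd_def
    by (intro sum.neutral ballI) (use t in \<open>auto simp: coef_def\<close>)
  then show ?thesis unfolding coef_def[of "koszul_d c"] if_not_P[OF False] by simp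
qed

lemma K2': "coef (koszul_d c) \<alpha> = bd (coef c \<alpha>)"
  using K2 by blast

lemma dd_zero: "koszul_d (koszul_d c) = (\<lambda>_. 0)"
proof
  fix T
  show "koszul_d (koszul_d c) T = 0"
    by (intro poly_mapping_eqI) (simp add: K1 K2' bd_bd)
qed

lemma coef_ext:
  assumes "\<And>\<alpha> S. coef c \<alpha> S = coef c' \<alpha> S"
  shows "c = c'"
proof
  fix S show "c S = c' S"
  proof (intro poly_mapping_eqI)
    fix m
    have "coef c (m + indS S) S = coef c' (m + indS S) S" by (rule assms)
    then show "Poly_Mapping.lookup (c S) m = Poly_Mapping.lookup (c' S) m"
      unfolding coef_def by (simp add: lookup_add lookup_indS)
  qed
qed


lemma edge_term:
  "c * Var u * Var v = Poly_Mapping.single (Poly_Mapping.single u 1 + Poly_Mapping.single v 1) (1::'k::comm_ring_1) * c"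
  unfolding Var_def by (simp add: mult_single mult.commute mult.left_commute)

lemma I1:
  fixes E :: "'v::finite \<Rightarrow> 'v \<Rightarrow> bool"
  assumes p: "p \<in> (edge_ideal E :: ('v, 'k::comm_ring_1) mpoly set)" and m: "Poly_Mapping.lookup p m \<noteq> 0"
  shows "hasE E m"
proof -
  obtain c where pc: "p = (\<Sum>e\<in>{(u, v). E u v}. c e * Var (fst e) * Var (snd e))"
    using p unfolding edge_ideal_def by blast
  have "(\<Sum>e\<in>{(u, v). E u v}. Poly_Mapping.lookup (c e * Var (fst e) * Var (snd e)) m) \<noteq> 0"
    using m unfolding pc lookup_sum .
  then obtain e where e: "e \<in> {(u, v). E u v}" "Poly_Mapping.lookup (c e * Var (fst e) * Var (snd e)) m \<noteq> 0"
    by (meson sum.not_neutral_contains_not_neutral)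
  obtain u v where uv: "e = (u, v)" by (cases e)
  have "Poly_Mapping.lookup (Poly_Mapping.single (Poly_Mapping.single u 1 + Poly_Mapping.single v 1) (1::'k) * c e) m \<noteq> 0"
    using e(2) unfolding uv edge_term by simp
  then have le: "\<forall>w. Poly_Mapping.lookup (Poly_Mapping.single u 1 + Poly_Mapping.single v (1::nat)) w \<le> Poly_Mapping.lookup m w"
    unfolding single_mult_lookup by (auto split: if_splits)
  have "0 < Poly_Mapping.lookup m u" using le[rule_format, of u] by (simp add: lookup_add lookup_single)
  moreover have "0 < Poly_Mapping.lookup m v" using le[rule_format, of v] by (simp add: lookup_add lookup_single)
  ultimately show ?thesis using e(1) uv unfolding hasE_def by auto
qed

lemma ei_zero: "0 \<in> edge_ideal E"
  unfolding edge_ideal_def by (auto intro!: exI[of _ "\<lambda>_. 0"])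

lemma ei_add:
  assumes "p \<in> edge_ideal E" "q \<in> edge_ideal E"
  shows "p + q \<in> (edge_ideal E :: ('v::finite, 'k::comm_ring_1) mpoly set)"
proof -
  obtain c1 where c1: "p = (\<Sum>e\<in>{(u, v). E u v}. c1 e * Var (fst e) * Var (snd e))"
    using assms(1) unfolding edge_ideal_def by blast
  obtain c2 where c2: "q = (\<Sum>e\<in>{(u, v). E u v}. c2 e * Var (fst e) * Var (snd e))"
    using assms(2) unfolding edge_ideal_def by blast
  have "p + q = (\<Sum>e\<in>{(u, v). E u v}. (c1 e + c2 e) * Var (fst e) * Var (snd e))"
    unfolding c1 c2 by (simp add: sum.distrib distrib_right)
  then show ?thesis unfolding edge_ideal_def by (intro CollectI exI[of _ "\<lambda>e. c1 e + c2 e"])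
qed

lemma ei_mono:
  fixes E :: "'v::finite \<Rightarrow> 'v \<Rightarrow> bool"
  assumes uv: "E u v" "u \<noteq> v" and pos: "0 < Poly_Mapping.lookup m u" "0 < Poly_Mapping.lookup m v"
  shows "Poly_Mapping.single m k \<in> (edge_ideal E :: ('v, 'k::comm_ring_1) mpoly set)"
proof -
  define r where "r = m - Poly_Mapping.single u 1 - Poly_Mapping.single v 1"
  have mr: "Poly_Mapping.single u 1 + Poly_Mapping.single v 1 + r = m"
    unfolding r_def using pos uv
    by (intro poly_mapping_eqI) (auto simp: lookup_add lookup_minus lookup_single when_def)
  have "(\<Sum>e\<in>{(u, v). E u v}. (if e = (u, v) then Poly_Mapping.single r k else 0) * Var (fst e) * Var (snd e))
      = (\<Sum>e\<in>{(u, v). E u v}. (if e = (u, v) then Poly_Mapping.single r k * Var u * Var v else 0))"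
    by (intro sum.cong refl) auto
  also have "\<dots> = Poly_Mapping.single r k * Var u * Var v"
    using uv by (simp add: sum.delta')
  also have "\<dots> = Poly_Mapping.single m k"
    unfolding edge_term mult_single mr[symmetric] by (simp add: add.commute)
  finally show ?thesis unfolding edge_ideal_def
    by (intro CollectI exI[of _ "\<lambda>e. if e = (u, v) then Poly_Mapping.single r k else 0"]) (rule sym)
qed

lemma I2:
  fixes E :: "'v::finite \<Rightarrow> 'v \<Rightarrow> bool" and p :: "('v, 'k::comm_ring_1) mpoly"
  assumes irr: "\<forall>u. \<not> E u u" and h: "\<And>m. Poly_Mapping.lookup p m \<noteq> 0 \<Longrightarrow> hasE E m"
  shows "p \<in> edge_ideal E"
proof -
  have dec: "p = (\<Sum>m\<in>Poly_Mapping.keys p. Poly_Mapping.single m (Poly_Mapping.lookup p m))"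
    by (intro poly_mapping_eqI) (simp add: lookup_sum lookup_single when_def in_keys_iff sum.delta)
  have "finite A \<Longrightarrow> \<forall>m\<in>A. hasE E m \<Longrightarrow> (\<Sum>m\<in>A. Poly_Mapping.single m (Poly_Mapping.lookup p m)) \<in> edge_ideal E" for A
  proof (induction A rule: finite_induct)
    case empty then show ?case by (simp add: ei_zero)
  next
    case (insert x A)
    obtain u v where uv: "E u v" "0 < Poly_Mapping.lookup x u" "0 < Poly_Mapping.lookup x v"
      using insert.prems unfolding hasE_def by auto
    have "u \<noteq> v" using uv irr by auto
    then have "Poly_Mapping.single x (Poly_Mapping.lookup p x) \<in> (edge_ideal E :: ('v, 'k) mpoly set)"
      using ei_mono uv by blast
    then show ?case using insert by (simp add: ei_add)
  qed
  moreover have "\<forall>m\<in>Poly_Mapping.keys p. hasE E m" using h by (simp add: in_keys_iff)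
  ultimately show ?thesis by (subst dec) simp
qed


definition CC :: "('v::finite \<Rightarrow> 'v \<Rightarrow> bool) \<Rightarrow> nat \<Rightarrow> int \<Rightarrow> ('v set \<Rightarrow> ('v, 'k::comm_ring_1) mpoly) \<Rightarrow> bool" where
  "CC E i j c \<longleftrightarrow> (\<forall>\<alpha> S. coef c \<alpha> S \<noteq> 0 \<longrightarrow> card S = i \<and> valid E \<alpha> S \<and> int (mon_deg \<alpha>) = j)"

lemma coef_shift: "coef c (m + indS S) S = Poly_Mapping.lookup (c S) m"
  unfolding coef_def by (simp add: lookup_add lookup_indS)

lemma chains_CC:
  fixes E :: "'v::finite \<Rightarrow> 'v \<Rightarrow> bool" and c :: "'v set \<Rightarrow> ('v, 'k::comm_ring_1) mpoly"
  assumes irr: "\<forall>u. \<not> E u u"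
  shows "c \<in> koszul_chains (edge_ideal E) i j \<longleftrightarrow> CC E i j c"
proof
  assume ch: "c \<in> koszul_chains (edge_ideal E) i j"
  show "CC E i j c" unfolding CC_def
  proof (intro allI impI)
    fix \<alpha> S assume nz: "coef c \<alpha> S \<noteq> 0"
    have pos: "\<forall>s\<in>S. 0 < Poly_Mapping.lookup \<alpha> s" and lk: "Poly_Mapping.lookup (c S) (\<alpha> - indS S) \<noteq> 0"
      using nz unfolding coef_def by (auto split: if_splits)
    have "c S \<noteq> 0" using lk by auto
    then have cS: "card S = i" "c S \<in> edge_ideal E" "homogeneous (j - int i) (c S)"
      using ch unfolding koszul_chains_def by auto
    have hE: "hasE E (\<alpha> - indS S)" by (rule I1[OF cS(2) lk])
    have "int (mon_deg (\<alpha> - indS S)) = j - int i"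
      using cS(3) lk unfolding homogeneous_def by (simp add: in_keys_iff)
    then have "int (mon_deg \<alpha>) = j" using md_split[OF pos] cS(1) by simp
    then show "card S = i \<and> valid E \<alpha> S \<and> int (mon_deg \<alpha>) = j"
      using cS(1) pos hE unfolding valid_def by simp
  qed
next
  assume cc: "CC E i j c"
  have key: "card S = i \<and> hasE E m \<and> int (mon_deg m) = j - int i" if "Poly_Mapping.lookup (c S) m \<noteq> 0" for S m
  proof -
    have "coef c (m + indS S) S \<noteq> 0" using that by (simp add: coef_shift)
    then have h: "card S = i" "valid E (m + indS S) S" "int (mon_deg (m + indS S)) = j"
      using cc unfolding CC_def by blast+
    have "hasE E m" using h(2) unfolding valid_def by simp
    moreover have "int (mon_deg m) = j - int i" using h(1,3) by (simp add: md_add md_indS)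
    ultimately show ?thesis using h(1) by simp
  qed
  show "c \<in> koszul_chains (edge_ideal E) i j"
    unfolding koszul_chains_def
  proof (intro CollectI allI impI)
    fix S assume "c S \<noteq> 0"
    then obtain m where m: "Poly_Mapping.lookup (c S) m \<noteq> 0"
      by (metis lookup_zero poly_mapping_eqI)
    have "c S \<in> edge_ideal E" using I2[where E = E, OF irr] key by blast
    moreover have "homogeneous (j - int i) (c S)" unfolding homogeneous_def using key by (simp add: in_keys_iff)
    ultimately show "card S = i \<and> c S \<in> edge_ideal E \<and> homogeneous (j - int i) (c S)"
      using key[OF m] by simp
  qed
qed

lemma image_CC:
  assumes cc: "CC E (Suc i) j c"
  shows "CC E i j (koszul_d c)"
  unfolding CC_def
proof (intro allI impI)
  fix \<alpha> T assume "coef (koszul_d c) \<alpha> T \<noteq> 0"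
  then have "bd (coef c \<alpha>) T \<noteq> 0" by (simp add: K2)
  then obtain s where s: "s \<in> UNIV - T" "ksign s (insert s T) * coef c \<alpha> (insert s T) \<noteq> 0"
    unfolding bd_def by (meson sum.not_neutral_contains_not_neutral)
  then have "coef c \<alpha> (insert s T) \<noteq> 0" by auto
  then have h: "card (insert s T) = Suc i" "valid E \<alpha> (insert s T)" "int (mon_deg \<alpha>) = j"
    using cc unfolding CC_def by blast+
  have "card T = i" using h(1) s(1) by simp
  moreover have "valid E \<alpha> T"
  proof -
    have p: "\<forall>t\<in>T. 0 < Poly_Mapping.lookup \<alpha> t" using h(2) unfolding valid_def by auto
    have mono: "0 < Poly_Mapping.lookup (\<alpha> - indS T) u" if "0 < Poly_Mapping.lookup (\<alpha> - indS (insert s T)) u" for u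
      using that by (auto simp: lookup_minus lookup_indS split: if_splits)
    have "hasE E (\<alpha> - indS T)" using h(2) mono unfolding valid_def hasE_def by blast
    then show ?thesis using p unfolding valid_def by simp
  qed
  ultimately show "card T = i \<and> valid E \<alpha> T \<and> int (mon_deg \<alpha>) = j" using h(3) by simp
qed

lemma bd_zero: "bd (\<lambda>_. 0) T = (0::'k::comm_ring_1)"
  unfolding bd_def by simp

lemma cyc_bd:
  fixes E :: "'v::finite \<Rightarrow> 'v \<Rightarrow> bool" and c :: "'v set \<Rightarrow> ('v, 'k::comm_ring_1) mpoly"
  assumes sg: "simple_graph E" and gf: "gap_free E" and n1: "1 \<le> n" and cf: "claw_free n E"
    and cc: "CC E i j c" and dc: "koszul_d c = (\<lambda>_. 0)" and deg: "int i + int n + 1 \<le> j"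
  shows "\<exists>b. CC E (Suc i) j b \<and> koszul_d b = c"
proof -
  define P where "P \<alpha> \<beta> \<longleftrightarrow> (\<forall>S. \<beta> S \<noteq> 0 \<longrightarrow> card S = Suc i \<and> valid E \<alpha> S) \<and> (\<forall>T. bd \<beta> T = coef c \<alpha> T)
      \<and> (\<beta> \<noteq> (\<lambda>_. 0) \<longrightarrow> (\<exists>S. coef c \<alpha> S \<noteq> 0))" for \<alpha> \<beta>
  have ex: "\<exists>\<beta>. P \<alpha> \<beta>" for \<alpha>
  proof (cases "\<exists>S. coef c \<alpha> S \<noteq> 0")
    case True
    then obtain S0 where "coef c \<alpha> S0 \<noteq> 0" by blast
    then have "int (mon_deg \<alpha>) = j" using cc unfolding CC_def by blast
    then have d: "i + n + 1 \<le> mon_deg \<alpha>" using deg by simp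
    have hyp: "\<And>S. coef c \<alpha> S \<noteq> 0 \<Longrightarrow> card S = i \<and> valid E \<alpha> S" using cc unfolding CC_def by blast
    have cyc: "\<And>T. bd (coef c \<alpha>) T = 0"
    proof -
      fix T
      have "bd (coef c \<alpha>) T = coef (koszul_d c) \<alpha> T" by (simp add: K2)
      also have "\<dots> = 0" unfolding dc coef_def by simp
      finally show "bd (coef c \<alpha>) T = 0" .
    qed
    obtain \<beta> where "(\<forall>S. \<beta> S \<noteq> 0 \<longrightarrow> card S = Suc i \<and> valid E \<alpha> S) \<and> (\<forall>T. bd \<beta> T = coef c \<alpha> T)"
      using scalar_main[OF sg gf n1 cf hyp d cyc] by blast
    then show ?thesis using True unfolding P_def by blast
  next
    case False
    have "P \<alpha> (\<lambda>_. 0)" unfolding P_def using False by (simp add: bd_zero)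
    then show ?thesis by blast
  qed
  define B where "B \<alpha> = (SOME \<beta>. P \<alpha> \<beta>)" for \<alpha>
  have BP: "P \<alpha> (B \<alpha>)" for \<alpha> unfolding B_def using ex by (rule someI_ex)
  have Bnz: "\<exists>S'. coef c \<alpha> S' \<noteq> 0" if "B \<alpha> S \<noteq> 0" for \<alpha> S
  proof -
    have "B \<alpha> \<noteq> (\<lambda>_. 0)" using that by auto
    then show ?thesis using BP[of \<alpha>] unfolding P_def by blast
  qed
  have Bsup: "card S = Suc i \<and> valid E \<alpha> S" if "B \<alpha> S \<noteq> 0" for \<alpha> S
    using BP[of \<alpha>] that unfolding P_def by blast
  have Bdeg: "int (mon_deg \<alpha>) = j" if "B \<alpha> S \<noteq> 0" for \<alpha> S
    using Bnz[OF that] cc unfolding CC_def by blast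
  define A where "A = (\<Union>S'. (\<lambda>m. m + indS S') ` Poly_Mapping.keys (c S'))"
  have finA: "finite A" unfolding A_def by simp
  have BA: "\<alpha> \<in> A" if BS: "B \<alpha> S \<noteq> 0" for \<alpha> S
  proof -
    obtain S' where nz: "coef c \<alpha> S' \<noteq> 0" using Bnz[OF BS] by blast
    have pos: "\<forall>s\<in>S'. 0 < Poly_Mapping.lookup \<alpha> s" and lk: "Poly_Mapping.lookup (c S') (\<alpha> - indS S') \<noteq> 0"
      using nz unfolding coef_def by (auto split: if_splits)
    have "\<alpha> = (\<alpha> - indS S') + indS S'" using indS_cancel[OF pos] by simp
    moreover have "\<alpha> - indS S' \<in> Poly_Mapping.keys (c S')" using lk by (simp add: in_keys_iff)
    ultimately show ?thesis unfolding A_def by blast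
  qed
  define b where "b S = Abs_poly_mapping (\<lambda>m. B (m + indS S) S)" for S
  have fin: "finite {m. B (m + indS S) S \<noteq> 0}" for S
  proof (rule finite_subset)
    show "{m. B (m + indS S) S \<noteq> 0} \<subseteq> (\<lambda>\<alpha>. \<alpha> - indS S) ` A"
    proof
      fix m assume "m \<in> {m. B (m + indS S) S \<noteq> 0}"
      then have "m + indS S \<in> A" using BA by blast
      moreover have "m = (m + indS S) - indS S" by simp
      ultimately show "m \<in> (\<lambda>\<alpha>. \<alpha> - indS S) ` A" by blast
    qed
    show "finite ((\<lambda>\<alpha>. \<alpha> - indS S) ` A)" using finA by simp
  qed
  have lb: "Poly_Mapping.lookup (b S) = (\<lambda>m. B (m + indS S) S)" for S
    unfolding b_def using fin by simp
  have cb: "coef b \<alpha> = B \<alpha>" for \<alpha>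
  proof
    fix S show "coef b \<alpha> S = B \<alpha> S"
    proof (cases "\<forall>s\<in>S. 0 < Poly_Mapping.lookup \<alpha> s")
      case True
      then show ?thesis unfolding coef_def lb using indS_cancel[OF True] by simp
    next
      case False
      then have "B \<alpha> S = 0" using Bsup unfolding valid_def by blast
      then show ?thesis unfolding coef_def if_not_P[OF False] by simp
    qed
  qed
  have "CC E (Suc i) j b" unfolding CC_def cb using Bsup Bdeg by blast
  moreover have "koszul_d b = c"
  proof (rule coef_ext)
    fix \<alpha> S
    have "coef (koszul_d b) \<alpha> S = bd (B \<alpha>) S" by (simp add: K2 cb)
    also have "\<dots> = coef c \<alpha> S" using BP[of \<alpha>] unfolding P_def by blast
    finally show "coef (koszul_d b) \<alpha> S = coef c \<alpha> S" .
  qed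
  ultimately show ?thesis by blast
qed

theorem theorem3p5:
  fixes E :: "'v::finite \<Rightarrow> 'v \<Rightarrow> bool" and n :: nat
  assumes "n > 0" and "simple_graph E" and "gap_free E" and "claw_free n E"
  shows "cm_reg (edge_ideal E :: ('v, 'k::field) mpoly set) \<le> ereal (real n)"
proof -
  have irr: "\<forall>u. \<not> E u u" using assms(2) unfolding simple_graph_def by auto
  have n1: "1 \<le> n" using assms(1) by simp
  have betti0: "graded_betti (edge_ideal E :: ('v, 'k) mpoly set) i j = 0" if ji: "\<not> j - int i \<le> int n" for i j
  proof -
    let ?I = "edge_ideal E :: ('v, 'k) mpoly set"
    have "{c \<in> koszul_chains ?I i j. koszul_d c = (\<lambda>_. 0)} = koszul_d ` koszul_chains ?I (Suc i) j"
    proof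
      show "{c \<in> koszul_chains ?I i j. koszul_d c = (\<lambda>_. 0)} \<subseteq> koszul_d ` koszul_chains ?I (Suc i) j"
      proof
        fix c assume "c \<in> {c \<in> koszul_chains ?I i j. koszul_d c = (\<lambda>_. 0)}"
        then have cc: "CC E i j c" and dc: "koszul_d c = (\<lambda>_. 0)" using chains_CC[where E = E, OF irr] by auto
        obtain b where "CC E (Suc i) j b" "koszul_d b = c"
          using cyc_bd[OF assms(2,3) n1 assms(4) cc dc] ji by auto
        then show "c \<in> koszul_d ` koszul_chains ?I (Suc i) j" using chains_CC[where E = E, OF irr] by blast
      qed
    next
      show "koszul_d ` koszul_chains ?I (Suc i) j \<subseteq> {c \<in> koszul_chains ?I i j. koszul_d c = (\<lambda>_. 0)}"
      proof
        fix c assume "c \<in> koszul_d ` koszul_chains ?I (Suc i) j"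
        then obtain b where b: "b \<in> koszul_chains ?I (Suc i) j" "c = koszul_d b" by blast
        then have "CC E i j c" using image_CC chains_CC[where E = E, OF irr] by blast
        then show "c \<in> {c \<in> koszul_chains ?I i j. koszul_d c = (\<lambda>_. 0)}"
          using chains_CC[where E = E, OF irr] b(2) dd_zero by auto
      qed
    qed
    then show ?thesis unfolding graded_betti_def by simp
  qed
  show ?thesis unfolding cm_reg_def
  proof (rule Sup_least)
    fix x assume "x \<in> {ereal (of_int (j - int i)) |i j. graded_betti (edge_ideal E :: ('v, 'k) mpoly set) i j \<noteq> 0}"
    then obtain i j where x: "x = ereal (of_int (j - int i))" and nz: "graded_betti (edge_ideal E :: ('v, 'k) mpoly set) i j \<noteq> 0"
      by blast
    have "j - int i \<le> int n"
    proof (rule ccontr)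
      assume "\<not> j - int i \<le> int n"
      then have "graded_betti (edge_ideal E :: ('v, 'k) mpoly set) i j = 0" by (rule betti0)
      then show False using nz by simp
    qed
    then have "real_of_int (j - int i) \<le> real n" by linarith
    then show "x \<le> ereal (real n)" unfolding x by simp
  qed
qed

end
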